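(* Let $n\in\mathbb{N}$, $a<b$, and let $f\colon[a,b]\to\mathbb{R}$ be such that the pointwise derivative $f^{(n-1)}$ exists and is continuous on $[a,b]$. Then the distributional derivative $f^{(n)}$ belongs to $\mathcal{A}_c$. Define $E_n(f)$ by $$\int_a^b f(x)\,dx = \frac{1}{(n-1)!}\sum_{k=0}^{n-2}\left[\frac{(b-a)^{k+1}(2n-k-2)!\,(n-k-1)!}{2^{2k+1}(2n-2k-2)!\,(k+1)!}\right]\left[f^{(k)}(a)+(-1)^{k}f^{(k)}(b)\right]+R_n+E_n(f),$$ where $R_n=\frac{(b-a)^nf^{(n-1)}(a)}{n!\,2^{2n-2}}$ if $n$ is odd and $R_n=0$ if $n$ is even. Then $$|E_n(f)|\leq \frac{\|f^{(n)}\|\,(b-a)^{n}}{(n-1)!\,2^{2n-2}},$$ and this estimate is sharp in the sense that the coefficient of $\|f^{(n)}\|$ cannot be reduced.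
   Context: $\mathcal{A}_c$ is the space of Schwartz distributions $g$ on $(a,b)$ that are the distributional derivative $g=G'$ of some $G\in C([a,b])$ with $G(a)=0$ (i.e. $\langle G',\psi\rangle=-\int_a^bG\psi'$ for all $\psi\in C_c^\infty((a,b))$); the integral is defined by $\int_a^x g=G(x)$ (continuous primitive integral). The Alexiewicz norm is $\|g\|=\sup_{a\le x\le b}|\int_a^x g|=\|G\|_\infty$. In particular $\|f^{(n)}\|=\sup_{a\le x\le b}|f^{(n-1)}(x)-f^{(n-1)}(a)|$. *)

theory Defs
  imports "HOL-Analysis.Analysis"
begin

text \<open>Df k is the k-th pointwise derivative of f = Df 0 on [a,b] (one-sided at the
endpoints); Df (n-1) exists and is continuous on [a,b].\<close>
definition derivs_upto :: "nat \<Rightarrow> real \<Rightarrow> real \<Rightarrow> (nat \<Rightarrow> real \<Rightarrow> real) \<Rightarrow> bool" where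
  "derivs_upto n a b Df \<longleftrightarrow>
     (\<forall>k < n - 1. \<forall>x \<in> {a..b}.
        (Df k has_real_derivative Df (Suc k) x) (at x within {a..b}))
     \<and> continuous_on {a..b} (Df (n - 1))"

text \<open>Membership of the distribution g = G' in A_c, described through its primitive G
(the continuous primitive integral): G continuous on [a,b] with G a = 0.\<close>
definition Ac_primitive :: "real \<Rightarrow> real \<Rightarrow> (real \<Rightarrow> real) \<Rightarrow> bool" where
  "Ac_primitive a b G \<longleftrightarrow> continuous_on {a..b} G \<and> G a = 0"

text \<open>Alexiewicz norm of g = G', given its primitive G: sup over [a,b] of |G x|.\<close>
definition alex_norm :: "real \<Rightarrow> real \<Rightarrow> (real \<Rightarrow> real) \<Rightarrow> real" where
  "alex_norm a b G = (SUP x\<in>{a..b}. \<bar>G x\<bar>)"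

text \<open>Primitive of the distributional derivative f^(n): x \<mapsto> f^(n-1)(x) - f^(n-1)(a).\<close>
definition nth_deriv_primitive :: "nat \<Rightarrow> real \<Rightarrow> (nat \<Rightarrow> real \<Rightarrow> real) \<Rightarrow> real \<Rightarrow> real" where
  "nth_deriv_primitive n a Df = (\<lambda>x. Df (n - 1) x - Df (n - 1) a)"

definition quad_coeff :: "nat \<Rightarrow> real \<Rightarrow> real \<Rightarrow> nat \<Rightarrow> real" where
  "quad_coeff n a b k =
     (b - a) ^ (k + 1) * fact (2 * n - k - 2) * fact (n - k - 1)
     / (2 ^ (2 * k + 1) * fact (2 * n - 2 * k - 2) * fact (k + 1))"

definition R_term :: "nat \<Rightarrow> real \<Rightarrow> real \<Rightarrow> (nat \<Rightarrow> real \<Rightarrow> real) \<Rightarrow> real" where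
  "R_term n a b Df =
     (if odd n then (b - a) ^ n * Df (n - 1) a / (fact n * 2 ^ (2 * n - 2)) else 0)"

definition E_err :: "nat \<Rightarrow> real \<Rightarrow> real \<Rightarrow> (nat \<Rightarrow> real \<Rightarrow> real) \<Rightarrow> real" where
  "E_err n a b Df =
     integral {a..b} (Df 0)
     - (1 / fact (n - 1)) * (\<Sum>k<n - 1. quad_coeff n a b k * (Df k a + (-1) ^ k * Df k b))
     - R_term n a b Df"

end

theory Submission
  imports Defs
begin


fun cheb :: "nat \<Rightarrow> real \<Rightarrow> real" where
  "cheb 0 y = 1"
| "cheb (Suc 0) y = 2 * y"
| "cheb (Suc (Suc m)) y = 2 * y * cheb (Suc m) y - cheb m y"

lemma cheb_trig: "cheb m (cos t) * sin t = sin (real (Suc m) * t)"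
proof (induction m t rule: cheb.induct)
  case 1 then show ?case by simp
next
  case 2 then show ?case by (simp add: sin_double)
next
  case (3 m t)
  define A where "A = real (Suc (Suc m)) * t"
  have e1: "real (Suc (Suc (Suc m))) * t = A + t" unfolding A_def by (simp add: algebra_simps)
  have e2: "real (Suc m) * t = A - t" unfolding A_def by (simp add: algebra_simps)
  have "cheb (Suc (Suc m)) (cos t) * sin t = 2 * cos t * (cheb (Suc m) (cos t) * sin t) - cheb m (cos t) * sin t"
    by (simp add: algebra_simps)
  also have "\<dots> = 2 * cos t * sin A - sin (A - t)"
  proof -
    have "cheb (Suc m) (cos t) * sin t = sin A" using 3 unfolding A_def by blast
    moreover have "cheb m (cos t) * sin t = sin (A - t)" using 3 e2 by metis
    ultimately show ?thesis by simp
  qed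
  also have "\<dots> = sin (A + t)" by (simp add: sin_add sin_diff)
  finally show ?case by (simp only: e1)
qed

lemma cheb_sym: "cheb m (-y) = (-1)^m * cheb m y"
  by (induction m y rule: cheb.induct) (auto simp: algebra_simps)

definition cc :: "nat \<Rightarrow> nat \<Rightarrow> real" where
  "cc m j = (-4)^j * real ((m + j + 1) choose (2 * j + 1))"

lemma cc_zero: "m < j \<Longrightarrow> cc m j = 0"
  unfolding cc_def by (subst binomial_eq_0) auto

lemma cc_sum_ext: "m < L \<Longrightarrow> (\<Sum>j\<le>m. cc m j * s^j) = (\<Sum>j<L. cc m j * s^j)"
  by (rule sum.mono_neutral_left) (auto simp: cc_zero)

lemma cc_rec: "cc (Suc (Suc m)) j = 2 * cc (Suc m) j - cc m j - 4 * (if j = 0 then 0 else cc (Suc m) (j - 1))"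
proof (cases j)
  case 0 then show ?thesis by (simp add: cc_def)
next
  case (Suc i)
  have b: "real ((m + i + 4) choose (2*i+3)) = 2 * real ((m + i + 3) choose (2*i+3))
      - real ((m + i + 2) choose (2*i+3)) + real ((m+i+2) choose (2*i+1))"
  proof -
    have "m + i + 4 = Suc (Suc (m+i+2))" "m+i+3 = Suc (m+i+2)" "2*i+3 = Suc (Suc (2*i+1))" by auto
    then show ?thesis by (simp only: binomial_Suc_Suc of_nat_add) simp
  qed
  show ?thesis using b unfolding cc_def Suc
    by (simp add: algebra_simps)
qed

lemma cheb_explicit: "cheb m y = (\<Sum>j\<le>m. cc m j * ((1 - y) / 2)^j)"
proof (induction m y rule: cheb.induct)
  case 1 then show ?case by (simp add: cc_def)
next
  case 2 then show ?case by (simp add: cc_def binomial_eq_0 field_simps)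
next
  case (3 m y)
  define s where "s = (1 - y) / 2"
  have y: "y = 1 - 2 * s" unfolding s_def by (simp add: field_simps)
  define L where "L = m + 3"
  have IH1: "cheb (Suc m) y = (\<Sum>j\<le>Suc m. cc (Suc m) j * s^j)" using 3 unfolding s_def by blast
  have IH2: "cheb m y = (\<Sum>j\<le>m. cc m j * s^j)" using 3 unfolding s_def by blast
  have l1: "Suc m < Suc L" "Suc m < L" "m < Suc L" by (auto simp: L_def)
  have X: "cheb (Suc m) y = (\<Sum>j<Suc L. cc (Suc m) j * s^j)"
    using IH1 cc_sum_ext[OF l1(1), of s] by (rule trans)
  have X': "cheb (Suc m) y = (\<Sum>j<L. cc (Suc m) j * s^j)"
    using IH1 cc_sum_ext[OF l1(2), of s] by (rule trans)
  have Y: "cheb m y = (\<Sum>j<Suc L. cc m j * s^j)"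
    using IH2 cc_sum_ext[OF l1(3), of s] by (rule trans)
  have sh: "(\<Sum>j<Suc L. (if j = 0 then 0 else cc (Suc m) (j - 1)) * s^j) = s * (\<Sum>j<L. cc (Suc m) j * s^j)"
    by (subst sum.lessThan_Suc_shift) (simp add: sum_distrib_left algebra_simps)
  have "(\<Sum>j\<le>Suc (Suc m). cc (Suc (Suc m)) j * s^j) = (\<Sum>j<Suc L. cc (Suc (Suc m)) j * s^j)"
    by (rule cc_sum_ext) (simp add: L_def)
  also have "\<dots> = (\<Sum>j<Suc L. 2 * (cc (Suc m) j * s^j) - cc m j * s^j - 4 * ((if j = 0 then 0 else cc (Suc m) (j - 1)) * s^j))"
    by (rule sum.cong) (auto simp: cc_rec algebra_simps)
  also have "\<dots> = 2 * (\<Sum>j<Suc L. cc (Suc m) j * s^j) - (\<Sum>j<Suc L. cc m j * s^j)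
      - 4 * (\<Sum>j<Suc L. (if j = 0 then 0 else cc (Suc m) (j - 1)) * s^j)"
    by (simp only: sum_subtractf sum_distrib_left)
  also have "\<dots> = 2 * cheb (Suc m) y - cheb m y - 4 * (s * cheb (Suc m) y)"
    by (simp only: X[symmetric] Y[symmetric] sh X'[symmetric])
  also have "\<dots> = cheb (Suc (Suc m)) y" by (simp add: y algebra_simps)
  finally show ?case by (simp add: s_def)
qed



definition yof :: "real \<Rightarrow> real \<Rightarrow> real \<Rightarrow> real" where
  "yof a b x = (2 * x - a - b) / (b - a)"

definition Wk :: "nat \<Rightarrow> real \<Rightarrow> real \<Rightarrow> real \<Rightarrow> real" where
  "Wk m a b x = (b - a)^m / (4^m * fact m) * cheb m (yof a b x)"

definition Fprim :: "nat \<Rightarrow> real \<Rightarrow> real \<Rightarrow> real \<Rightarrow> real" where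
  "Fprim m a b x = (b - a)^(Suc m) / (2 * 4^m * fact m) * cos (real (Suc m) * arccos (yof a b x)) / real (Suc m)"

lemma yof_range: "a < b \<Longrightarrow> x \<in> {a..b} \<Longrightarrow> -1 \<le> yof a b x \<and> yof a b x \<le> 1"
  by (auto simp: yof_def field_simps)

lemma yof_range_open: "a < b \<Longrightarrow> x \<in> {a<..<b} \<Longrightarrow> -1 < yof a b x \<and> yof a b x < 1"
  by (auto simp: yof_def field_simps)

lemma yof_lin: "yof a b = (\<lambda>x. (2 / (b - a)) * x - (a + b) / (b - a))"
  by (rule ext) (simp add: yof_def diff_divide_distrib add_divide_distrib)

lemma yof_cont: "continuous_on S (yof a b)"
  unfolding yof_lin by (intro continuous_intros)

lemma Fprim_cont: "a < b \<Longrightarrow> continuous_on {a..b} (Fprim m a b)"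
  unfolding Fprim_def
  by (intro continuous_intros yof_cont) (use yof_range in auto)

lemma cheb_arccos:
  assumes "-1 < y" "y < 1"
  shows "cheb m y = sin (real (Suc m) * arccos y) / sin (arccos y)"
proof -
  have "sin (arccos y) \<noteq> 0" using sin_arccos_nonzero assms by blast
  moreover have "cheb m (cos (arccos y)) * sin (arccos y) = sin (real (Suc m) * arccos y)"
    by (rule cheb_trig)
  ultimately show ?thesis using assms by (simp add: field_simps)
qed

lemma Fprim_deriv:
  assumes ab: "a < b" and x: "x \<in> {a<..<b}"
  shows "(Fprim m a b has_real_derivative Wk m a b x) (at x)"
proof -
  define y where "y = yof a b x"
  have y: "-1 < y" "y < 1" using yof_range_open[OF ab x] by (auto simp: y_def)
  define K where "K = (b - a)^(Suc m) / (2 * 4^m * fact m)"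
  define N where "N = real (Suc m)"
  have Npos: "N > 0" by (simp add: N_def)
  have dy: "(yof a b has_real_derivative 2 / (b - a)) (at x)"
  proof -
    have "((\<lambda>x. (2/(b-a))*x - (a+b)/(b-a)) has_real_derivative 2/(b-a)*1 - 0) (at x)"
      by (intro DERIV_diff DERIV_cmult DERIV_ident DERIV_const)
    then show ?thesis unfolding yof_lin by simp
  qed
  have da: "((\<lambda>x. arccos (yof a b x)) has_real_derivative inverse (- sqrt (1 - y\<^sup>2)) * (2 / (b - a))) (at x)"
    using DERIV_chain2[OF DERIV_arccos[OF y[unfolded y_def]] dy] by (simp add: y_def)
  have dF: "(Fprim m a b has_real_derivative
       K * (- sin (N * arccos y) * (N * (inverse (- sqrt (1 - y\<^sup>2)) * (2 / (b - a))))) / N) (at x)"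
    unfolding Fprim_def K_def[symmetric] N_def[symmetric]
    using y[unfolded y_def] dy by (auto intro!: derivative_eq_intros simp: y_def)
  have s: "sqrt (1 - y\<^sup>2) = sin (arccos y)" using y by (simp add: sin_arccos)
  have s0: "sin (arccos y) \<noteq> 0" using sin_arccos_nonzero y by blast
  have "K * (- sin (N * arccos y) * (N * (inverse (- sqrt (1 - y\<^sup>2)) * (2 / (b - a))))) / N
      = Wk m a b x"
    unfolding Wk_def y_def[symmetric] cheb_arccos[OF y] s K_def N_def[symmetric]
    using ab Npos s0 by (simp add: field_simps power_Suc)
  with dF show ?thesis by simp
qed



definition zk :: "nat \<Rightarrow> real \<Rightarrow> real \<Rightarrow> nat \<Rightarrow> real" where
  "zk m a b k = (a + b) / 2 + (b - a) / 2 * cos (real k * pi / real (Suc m))"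

definition Kc :: "nat \<Rightarrow> real \<Rightarrow> real \<Rightarrow> real" where
  "Kc m a b = (b - a)^(Suc m) / (2 * 4^m * fact m)"

lemma yof_zk: "a < b \<Longrightarrow> yof a b (zk m a b k) = cos (real k * pi / real (Suc m))"
  by (simp add: yof_def zk_def field_simps)

lemma zk_0: "zk m a b 0 = b" by (simp add: zk_def field_simps)
lemma zk_N: "zk m a b (Suc m) = a"
proof -
  have "real (Suc m) * pi / real (Suc m) = pi" by (simp del: of_nat_Suc)
  then show ?thesis by (simp add: zk_def field_simps del: of_nat_Suc)
qed

lemma zk_in: "a < b \<Longrightarrow> zk m a b k \<in> {a..b}"
proof -
  assume ab: "a < b"
  define c where "c = cos (real k * pi / real (Suc m))"
  have c: "-1 \<le> c" "c \<le> 1" by (auto simp: c_def)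
  have h: "(b - a) / 2 > 0" using ab by simp
  have "(b - a) / 2 * (-1) \<le> (b - a) / 2 * c" using c h by (intro mult_left_mono) auto
  moreover have "(b - a) / 2 * c \<le> (b - a) / 2 * 1" using c h by (intro mult_left_mono) auto
  ultimately show ?thesis unfolding zk_def c_def[symmetric] by (simp add: field_simps)
qed

lemma zk_mono: "a < b \<Longrightarrow> k < Suc m \<Longrightarrow> zk m a b (Suc k) \<le> zk m a b k"
proof -
  assume ab: "a < b" and k: "k < Suc m"
  have "cos (real (Suc k) * pi / real (Suc m)) \<le> cos (real k * pi / real (Suc m))"
    using k by (intro cos_monotone_0_pi_le) (auto simp: field_simps)
  then show ?thesis using ab unfolding zk_def by (auto intro!: mult_left_mono)
qed

lemma Fprim_zk: "a < b \<Longrightarrow> k \<le> Suc m \<Longrightarrow> Fprim m a b (zk m a b k) = Kc m a b / real (Suc m) * (-1)^k"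
proof -
  assume ab: "a < b" and k: "k \<le> Suc m"
  have kp: "real k * pi \<le> real (Suc m) * pi" using k by (intro mult_right_mono) auto
  have "arccos (cos (real k * pi / real (Suc m))) = real k * pi / real (Suc m)"
    using kp by (intro arccos_cos) (auto simp: field_simps)
  then show ?thesis unfolding Fprim_def yof_zk[OF ab] Kc_def by simp
qed

lemma Wk_sign:
  assumes ab: "a < b" and k: "k < Suc m" and x: "x \<in> {zk m a b (Suc k)<..<zk m a b k}"
  shows "\<bar>Wk m a b x\<bar> = (-1)^k * Wk m a b x"
proof -
  define N where "N = real (Suc m)"
  have Npos: "N > 0" by (simp add: N_def)
  define y where "y = yof a b x"
  have mono: "\<And>u v. u < v \<Longrightarrow> yof a b u < yof a b v"
    using ab by (simp add: yof_def divide_strict_right_mono)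
  have y1: "cos (real (Suc k) * pi / N) < y" using mono[of "zk m a b (Suc k)" x] x yof_zk[OF ab]
    by (simp add: y_def N_def)
  have y2: "y < cos (real k * pi / N)" using mono[of x "zk m a b k"] x yof_zk[OF ab]
    by (simp add: y_def N_def)
  have yr: "-1 < y" "y < 1" using y1 y2 by (smt (verit) cos_ge_minus_one cos_le_one)+
  define t where "t = arccos y"
  have t1: "real k * pi / N < t"
  proof -
    have "arccos (cos (real k * pi / N)) < arccos y" using y2 yr by (intro arccos_less_arccos) auto
    moreover have "arccos (cos (real k * pi / N)) = real k * pi / N"
    proof -
      have kp: "real k * pi \<le> N * pi" using k by (intro mult_right_mono) (auto simp: N_def)
      show ?thesis using kp Npos by (intro arccos_cos) (auto simp: field_simps)
    qed
    ultimately show ?thesis by (simp add: t_def)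
  qed
  have t2: "t < real (Suc k) * pi / N"
  proof -
    have "arccos y < arccos (cos (real (Suc k) * pi / N))" using y1 yr by (intro arccos_less_arccos) auto
    moreover have "arccos (cos (real (Suc k) * pi / N)) = real (Suc k) * pi / N"
      using k Npos by (intro arccos_cos) (auto simp: field_simps N_def)
    ultimately show ?thesis by (simp add: t_def)
  qed
  have st: "sin t > 0"
  proof (rule sin_gt_zero)
    show "0 < t" using t1 Npos by (smt (verit) divide_nonneg_pos of_nat_0_le_iff mult_nonneg_nonneg pi_ge_zero)
    have "real (Suc k) * pi / N \<le> pi" using k Npos by (simp add: field_simps N_def)
    then show "t < pi" using t2 by simp
  qed
  define u where "u = N * t - real k * pi"
  have u: "0 < u" "u < pi" using t1 t2 Npos by (auto simp: u_def field_simps)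
  have "sin (N * t) = sin (u + real k * pi)" by (simp add: u_def)
  also have "\<dots> = (-1)^k * sin u" by (simp add: sin_add)
  finally have sN: "(-1)^k * sin (N * t) = sin u" by simp
  have "sin u > 0" using u sin_gt_zero by blast
  have ch: "cheb m y = sin (N * t) / sin t" using cheb_arccos[OF yr] by (simp add: t_def N_def)
  have "(-1)^k * cheb m y > 0" unfolding ch using sN \<open>sin u > 0\<close> st
    by (metis divide_pos_pos times_divide_eq_right)
  moreover have "(b - a)^m / (4^m * fact m) > 0" using ab by simp
  ultimately have pos: "(-1)^k * Wk m a b x \<ge> 0" unfolding Wk_def y_def[symmetric]
    by (metis (no_types, opaque_lifting) less_eq_real_def mult.left_commute zero_less_mult_iff)
  have "\<bar>Wk m a b x\<bar> = \<bar>(-1)^k * Wk m a b x\<bar>" by (simp add: abs_mult)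
  also have "\<dots> = (-1)^k * Wk m a b x" using pos by simp
  finally show ?thesis .
qed

lemma piece_integral:
  assumes ab: "a < b" and k: "k < Suc m"
  shows "((\<lambda>x. \<bar>Wk m a b x\<bar>) has_integral 2 * Kc m a b / real (Suc m)) {zk m a b (Suc k)..zk m a b k}"
proof -
  let ?f = "\<lambda>x. (-1)^k * Fprim m a b x"
  have sub: "{zk m a b (Suc k)..zk m a b k} \<subseteq> {a..b}" using zk_in[OF ab] by auto
  have "((\<lambda>x. \<bar>Wk m a b x\<bar>) has_integral (?f (zk m a b k) - ?f (zk m a b (Suc k)))) {zk m a b (Suc k)..zk m a b k}"
  proof (rule fundamental_theorem_of_calculus_interior)
    show "zk m a b (Suc k) \<le> zk m a b k" using zk_mono[OF ab k] .
    show "continuous_on {zk m a b (Suc k)..zk m a b k} ?f"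
      by (intro continuous_intros continuous_on_subset[OF Fprim_cont[OF ab] sub])
    fix x assume x: "x \<in> {zk m a b (Suc k)<..<zk m a b k}"
    have "x \<in> {a<..<b}" using x sub by auto
    then have "(?f has_real_derivative (-1)^k * Wk m a b x) (at x)"
      by (intro DERIV_cmult Fprim_deriv ab)
    then show "(?f has_vector_derivative \<bar>Wk m a b x\<bar>) (at x)"
      using Wk_sign[OF ab k x] by (simp add: has_real_derivative_iff_has_vector_derivative)
  qed
  moreover have "?f (zk m a b k) - ?f (zk m a b (Suc k)) = 2 * Kc m a b / real (Suc m)"
  proof -
    have pp: "(-1::real)^k * (-1)^k = 1" by (simp add: power_mult_distrib[symmetric])
    have "?f (zk m a b k) - ?f (zk m a b (Suc k)) = Kc m a b / real (Suc m) * ((-1)^k * (-1)^k) + Kc m a b / real (Suc m) * ((-1)^k * (-1)^k)"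
      using k by (simp add: Fprim_zk[OF ab] algebra_simps del: of_nat_Suc)
    then show ?thesis unfolding pp by simp
  qed
  ultimately show ?thesis by simp
qed

lemma partial_abs_integral:
  assumes ab: "a < b"
  shows "j \<le> Suc m \<Longrightarrow> ((\<lambda>x. \<bar>Wk m a b x\<bar>) has_integral real j * (2 * Kc m a b / real (Suc m))) {zk m a b j..b}"
proof (induction j)
  case 0 then show ?case using has_integral_refl(1)[of _ b] by (simp add: zk_0)
next
  case (Suc j)
  have "((\<lambda>x. \<bar>Wk m a b x\<bar>) has_integral 2 * Kc m a b / real (Suc m) + real j * (2 * Kc m a b / real (Suc m))) {zk m a b (Suc j)..b}"
    using Suc by (intro has_integral_combine[OF zk_mono[OF ab] _ piece_integral[OF ab]]) (use zk_in[OF ab] in auto)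
  moreover have "2 * Kc m a b / real (Suc m) + real j * (2 * Kc m a b / real (Suc m)) = real (Suc j) * (2 * Kc m a b / real (Suc m))"
    by (simp only: of_nat_Suc distrib_right mult_1 add.commute)
  ultimately show ?case by simp
qed

lemma abs_integral:
  assumes ab: "a < b"
  shows "((\<lambda>x. \<bar>Wk m a b x\<bar>) has_integral (b - a)^(Suc m) / (4^m * fact m)) {a..b}"
proof -
  have "((\<lambda>x. \<bar>Wk m a b x\<bar>) has_integral real (Suc m) * (2 * Kc m a b / real (Suc m))) {a..b}"
    using partial_abs_integral[OF ab, of "Suc m" m] by (simp add: zk_N)
  then show ?thesis by (simp add: Kc_def)
qed

lemma W_integral:
  assumes ab: "a < b"
  shows "(Wk m a b has_integral Kc m a b / real (Suc m) * (1 - (-1)^(Suc m))) {a..b}"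
proof -
  have "(Wk m a b has_integral (Fprim m a b b - Fprim m a b a)) {a..b}"
    using ab by (intro fundamental_theorem_of_calculus_interior Fprim_cont)
      (auto simp: has_real_derivative_iff_has_vector_derivative[symmetric] intro!: Fprim_deriv)
  moreover have "Fprim m a b b = Kc m a b / real (Suc m)" using Fprim_zk[OF ab, of 0 m] by (simp add: zk_0)
  moreover have "Fprim m a b a = Kc m a b / real (Suc m) * (-1)^(Suc m)" using Fprim_zk[OF ab, of "Suc m" m] by (simp add: zk_N)
  ultimately show ?thesis by (simp add: algebra_simps add_divide_distrib)
qed



definition bet :: "nat \<Rightarrow> real \<Rightarrow> real \<Rightarrow> nat \<Rightarrow> real" where
  "bet n a b j = (if j = 0 then 1 else if j < n then quad_coeff n a b (j - 1) / fact (n - 1) else 0)"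

definition pp :: "nat \<Rightarrow> real \<Rightarrow> real \<Rightarrow> nat \<Rightarrow> real \<Rightarrow> real" where
  "pp n a b j x = (\<Sum>i\<le>j. bet n a b (j - i) * (x - b)^i / fact i)"

lemma pp_0: "pp n a b 0 x = 1" by (simp add: pp_def bet_def)

lemma pp_b: "pp n a b j b = bet n a b j"
proof -
  have "(\<Sum>i\<le>j. bet n a b (j - i) * (b - b)^i / fact i) = (\<Sum>i\<le>j. if i = 0 then bet n a b j else 0)"
    by (rule sum.cong) auto
  then show ?thesis unfolding pp_def by simp
qed

lemma pow_deriv: "((\<lambda>x. (x - b)^(Suc i)) has_real_derivative real (Suc i) * (x - b)^i) (at x)"
proof -
  have "((\<lambda>x. x - b) has_real_derivative 1 - 0) (at x)" by (intro DERIV_diff DERIV_ident DERIV_const)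
  from DERIV_power[OF this, of "Suc i"] show ?thesis by simp
qed

lemma pp_deriv: "(pp n a b (Suc j) has_real_derivative pp n a b j x) (at x)"
proof -
  have e: "pp n a b (Suc j) = (\<lambda>x. bet n a b (Suc j) + (\<Sum>i\<le>j. bet n a b (j - i) / fact (Suc i) * (x - b)^(Suc i)))"
    by (rule ext) (simp only: pp_def sum.atMost_Suc_shift, simp)
  have "((\<lambda>x. bet n a b (Suc j) + (\<Sum>i\<le>j. bet n a b (j - i) / fact (Suc i) * (x - b)^(Suc i)))
      has_real_derivative 0 + (\<Sum>i\<le>j. bet n a b (j - i) / fact (Suc i) * (real (Suc i) * (x - b)^i))) (at x)"
    by (intro DERIV_add DERIV_const DERIV_sum DERIV_cmult pow_deriv)
  moreover have "(\<Sum>i\<le>j. bet n a b (j - i) / fact (Suc i) * (real (Suc i) * (x - b)^i)) = pp n a b j x"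
    unfolding pp_def by (rule sum.cong) (auto simp: field_simps simp del: of_nat_Suc)
  ultimately show ?thesis unfolding e by simp
qed

lemma coef:
  assumes i: "i \<le> m"
  shows "bet (Suc m) a b (m - i) / fact i = (b - a)^(m - i) * 4^i * real ((m + i + 1) choose (2 * i + 1)) / (4^m * fact m)"
proof (cases "i = m")
  case True
  have "(m + i + 1) choose (2 * i + 1) = 1" using True by (simp add: mult_2 del: binomial_Suc_Suc)
  then show ?thesis using True by (simp add: bet_def)
next
  case False
  define d where "d = m - i - 1"
  have m: "m = i + d + 1" using False i by (simp add: d_def)
  have md: "m - i = Suc d" by (simp add: m)
  have bet: "bet (Suc m) a b (m - i) = quad_coeff (Suc m) a b d / fact m"
    unfolding md bet_def by (simp add: m)
  have n1: "2 * Suc m - d - 2 = 2*i + d + 2" "Suc m - d - 1 = Suc i" "2 * Suc m - 2 * d - 2 = 2*i + 2"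
    by (simp_all add: m)
  have q: "quad_coeff (Suc m) a b d = (b - a)^(Suc d) * fact (2*i+d+2) * fact (Suc i) / (2^(2*d+1) * fact (2*i+2) * fact (Suc d))"
    unfolding quad_coeff_def n1 by simp
  have ch: "real ((m + i + 1) choose (2 * i + 1)) = fact (2*i+d+2) / (fact (2*i+1) * fact (Suc d))"
  proof -
    have e1: "m + i + 1 = 2*i+d+2" "2*i+d+2 - (2*i+1) = Suc d" by (simp_all add: m)
    have "real ((2*i+d+2) choose (2*i+1)) = fact (2*i+d+2) / (fact (2*i+1) * fact (2*i+d+2 - (2*i+1)))"
      by (rule binomial_fact) simp
    then show ?thesis unfolding e1 .
  qed
  have f1: "fact (2*i+2) = (2 * real i + 2) * (fact (2*i+1) :: real)"
    using fact_Suc[of "2*i+1", where 'a=real] by (simp add: algebra_simps)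
  have f2: "fact (Suc i) = (real i + 1) * (fact i :: real)" by (simp add: algebra_simps)
  have p4: "(4::real)^m = 4^i * 2^(2*d+1) * 2" unfolding m
    by (simp add: power_add power_mult)
  have gen: "\<And>H A F P B C M Q r::real. r > 0 \<Longrightarrow> F > 0 \<Longrightarrow> Q > 0 \<Longrightarrow>
     H * A * (r * F) / (P * ((2 * r) * B) * C) / M / F = H * Q * (A / (B * C)) / (Q * P * 2 * M)"
    by (simp add: field_simps)
  have two: "2 * real i + 2 = 2 * (real i + 1)" by simp
  show ?thesis unfolding bet q f1 f2 two unfolding ch md p4
    by (intro gen) auto
qed

lemma pp_W:
  assumes ab: "a < b"
  shows "pp (Suc m) a b m x = Wk m a b x"
proof -
  have y: "(1 - yof a b x) / 2 = (b - x) / (b - a)" using ab by (simp add: yof_def field_simps)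
  have "Wk m a b x = (\<Sum>j\<le>m. (b - a)^m / (4^m * fact m) * (cc m j * ((b - x) / (b - a))^j))"
    unfolding Wk_def cheb_explicit y by (simp add: sum_distrib_left)
  also have "\<dots> = (\<Sum>j\<le>m. bet (Suc m) a b (m - j) * (x - b)^j / fact j)"
  proof (rule sum.cong)
    fix j assume j: "j \<in> {..m}"
    then have jm: "j \<le> m" by simp
    have hp: "(b - a)^m = (b - a)^(m - j) * (b - a)^j" using jm by (simp add: power_add[symmetric])
    have hz: "(b - a)^j \<noteq> 0" using ab by simp
    have e4: "(-4::real)^j * (b - x)^j = 4^j * (x - b)^j"
      by (simp add: power_mult_distrib[symmetric])
    have "bet (Suc m) a b (m - j) * (x - b)^j / fact j = (bet (Suc m) a b (m - j) / fact j) * (x - b)^j" by simp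
    also have "\<dots> = (b - a)^(m - j) * 4^j * real ((m + j + 1) choose (2 * j + 1)) / (4^m * fact m) * (x - b)^j"
      unfolding coef[OF jm] ..
    also have "\<dots> = (b - a)^m / (4^m * fact m) * (cc m j * ((b - x) / (b - a))^j)"
    proof -
      have gen: "\<And>H w C D v q u T::real. w * v = q * u \<Longrightarrow> T \<noteq> 0 \<Longrightarrow> H * w * C / D * v = H * T / D * (q * C * (u / T))"
        by (simp add: field_simps)
      show ?thesis unfolding cc_def hp power_divide
        by (rule gen) (use hz e4 in auto)
    qed
    finally show "(b - a)^m / (4^m * fact m) * (cc m j * ((b - x) / (b - a))^j) = bet (Suc m) a b (m - j) * (x - b)^j / fact j" by simp
  qed simp
  finally show ?thesis unfolding pp_def by simp
qed


lemma yof_refl: "a < b \<Longrightarrow> yof a b (a + b - x) = - yof a b x"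
  by (simp add: yof_def field_simps)

lemma Wk_sym: "a < b \<Longrightarrow> Wk m a b (a + b - x) = (-1)^m * Wk m a b x"
  unfolding Wk_def by (simp add: yof_refl cheb_sym)

lemma pp_sym:
  assumes ab: "a < b" and j: "j \<le> m"
  shows "pp (Suc m) a b j x = (-1)^j * pp (Suc m) a b j (a + b - x)"
proof -
  have base: "\<forall>x. pp (Suc m) a b m x = (-1)^m * pp (Suc m) a b m (a + b - x)"
  proof
    fix x
    have pp1: "(-1::real)^m * (-1)^m = 1" by (simp add: power_mult_distrib[symmetric])
    show "pp (Suc m) a b m x = (-1)^m * pp (Suc m) a b m (a + b - x)"
      unfolding pp_W[OF ab] Wk_sym[OF ab] mult.assoc[symmetric] pp1 by simp
  qed
  have main: "i \<le> m \<Longrightarrow> \<forall>x. pp (Suc m) a b (m - i) x = (-1)^(m - i) * pp (Suc m) a b (m - i) (a + b - x)" for i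
  proof (induction i)
    case 0 show ?case using base unfolding diff_zero .
  next
    case (Suc i)
    define j where "j = m - Suc i"
    have mi: "m - i = Suc j" using Suc.prems by (simp add: j_def)
    have le: "i \<le> m" using Suc.prems by simp
    have H: "\<forall>x. pp (Suc m) a b (Suc j) x = (-1)^(Suc j) * pp (Suc m) a b (Suc j) (a + b - x)"
      using Suc.IH[OF le] unfolding mi .
    have IH: "\<forall>x. pp (Suc m) a b (Suc j) x - (-1)^(Suc j) * pp (Suc m) a b (Suc j) (a + b - x) = 0"
    proof
      fix x show "pp (Suc m) a b (Suc j) x - (-1)^(Suc j) * pp (Suc m) a b (Suc j) (a + b - x) = 0"
        using spec[OF H, of x] by linarith
    qed
    show ?case unfolding j_def[symmetric]
    proof
      fix x
      let ?D = "\<lambda>x. pp (Suc m) a b (Suc j) x - (-1)^(Suc j) * pp (Suc m) a b (Suc j) (a + b - x)"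
      have dr: "((\<lambda>x. a + b - x) has_real_derivative 0 - 1) (at x)"
        by (intro DERIV_diff DERIV_const DERIV_ident)
      have d2: "((\<lambda>x. pp (Suc m) a b (Suc j) (a + b - x)) has_real_derivative pp (Suc m) a b j (a + b - x) * (0 - 1)) (at x)"
        by (rule DERIV_chain2[OF pp_deriv dr])
      have d1: "(?D has_real_derivative pp (Suc m) a b j x - (-1)^(Suc j) * (pp (Suc m) a b j (a + b - x) * (0 - 1))) (at x)"
        by (rule DERIV_diff[OF pp_deriv DERIV_cmult[OF d2]])
      have d0: "(?D has_real_derivative 0) (at x)"
      proof -
        have "?D = (\<lambda>x. 0)" using IH by auto
        then show ?thesis by simp
      qed
      have "pp (Suc m) a b j x - (-1)^(Suc j) * (pp (Suc m) a b j (a + b - x) * (0 - 1)) = 0"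
        using DERIV_unique[OF d1 d0] .
      then show "pp (Suc m) a b j x = (-1)^j * pp (Suc m) a b j (a + b - x)" by simp
    qed
  qed
  have jj: "m - (m - j) = j" using j by simp
  show ?thesis using main[of "m - j", OF diff_le_self, unfolded jj] by blast
qed

lemma pp_a:
  assumes ab: "a < b" and j: "j \<le> m"
  shows "pp (Suc m) a b j a = (-1)^j * bet (Suc m) a b j"
  using pp_sym[OF ab j, of a] by (simp add: pp_b)

lemma pp_cont: "continuous_on S (pp n a b j)"
  unfolding pp_def by (intro continuous_intros) auto



lemma Df_cont:
  assumes D: "derivs_upto (Suc m) a b Df" and k: "k \<le> m"
  shows "continuous_on {a..b} (Df k)"
proof (cases "k = m")
  case True then show ?thesis using D by (simp add: derivs_upto_def)
next
  case False
  then have "k < m" using k by simp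
  then have "\<And>x. x \<in> {a..b} \<Longrightarrow> (Df k has_real_derivative Df (Suc k) x) (at x within {a..b})"
    using D by (simp add: derivs_upto_def)
  then show ?thesis by (rule DERIV_continuous_on)
qed

lemma ibp_step:
  assumes ab: "a < b" and D: "derivs_upto (Suc m) a b Df" and j: "Suc j \<le> m"
  shows "integral {a..b} (\<lambda>x. pp (Suc m) a b j x * Df j x)
     = (Df j b * pp (Suc m) a b (Suc j) b - Df j a * pp (Suc m) a b (Suc j) a)
       - integral {a..b} (\<lambda>x. pp (Suc m) a b (Suc j) x * Df (Suc j) x)"
proof -
  let ?I = "integral {a..b} (\<lambda>x. pp (Suc m) a b (Suc j) x * Df (Suc j) x)"
  let ?B = "pp (Suc m) a b (Suc j) b * Df j b - pp (Suc m) a b (Suc j) a * Df j a"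
  have cj: "continuous_on {a..b} (Df j)" using Df_cont[OF D] j by simp
  have cj1: "continuous_on {a..b} (Df (Suc j))" using Df_cont[OF D] j by simp
  have int: "((\<lambda>x. pp (Suc m) a b (Suc j) x * Df (Suc j) x) has_integral ?B - (?B - ?I)) {a..b}"
    using integrable_continuous_real[OF continuous_on_mult[OF pp_cont[of "{a..b}" "Suc m" a b "Suc j"] cj1]]
    by (simp add: integrable_integral)
  have "((\<lambda>x. pp (Suc m) a b j x * Df j x) has_integral ?B - ?I) {a..b}"
  proof (rule integration_by_parts_interior[OF bounded_bilinear_mult, where f="pp (Suc m) a b (Suc j)" and g="Df j"])
    show "a \<le> b" using ab by simp
    show "continuous_on {a..b} (pp (Suc m) a b (Suc j))" by (rule pp_cont)
    show "continuous_on {a..b} (Df j)" by (rule cj)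
    fix x assume x: "x \<in> {a<..<b}"
    show "(pp (Suc m) a b (Suc j) has_vector_derivative pp (Suc m) a b j x) (at x)"
      using pp_deriv by (simp add: has_real_derivative_iff_has_vector_derivative[symmetric])
    have "j < Suc m - 1" using j by simp
    then have "(Df j has_real_derivative Df (Suc j) x) (at x within {a..b})"
      using D x by (simp add: derivs_upto_def)
    then show "(Df j has_vector_derivative Df (Suc j) x) (at x)"
      using x by (simp add: at_within_Icc_at has_real_derivative_iff_has_vector_derivative[symmetric])
  next
    show "((\<lambda>x. pp (Suc m) a b (Suc j) x * Df (Suc j) x) has_integral ?B - (?B - ?I)) {a..b}" by (rule int)
  qed
  then show ?thesis by (simp add: integral_unique algebra_simps)
qed

lemma ibp:
  assumes ab: "a < b" and D: "derivs_upto (Suc m) a b Df"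
  shows "j \<le> m \<Longrightarrow> integral {a..b} (Df 0) =
     (\<Sum>k<j. (-1)^k * (Df k b * pp (Suc m) a b (Suc k) b - Df k a * pp (Suc m) a b (Suc k) a))
     + (-1)^j * integral {a..b} (\<lambda>x. pp (Suc m) a b j x * Df j x)"
proof (induction j)
  case 0 then show ?case by (simp add: pp_0)
next
  case (Suc j)
  then have IH: "integral {a..b} (Df 0) =
     (\<Sum>k<j. (-1)^k * (Df k b * pp (Suc m) a b (Suc k) b - Df k a * pp (Suc m) a b (Suc k) a))
     + (-1)^j * integral {a..b} (\<lambda>x. pp (Suc m) a b j x * Df j x)" by simp
  show ?case unfolding IH ibp_step[OF ab D Suc.prems] by (simp add: algebra_simps)
qed


lemma Wk_cont: "a < b \<Longrightarrow> continuous_on S (Wk m a b)"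
proof -
  assume ab: "a < b"
  have "Wk m a b = pp (Suc m) a b m" using pp_W[OF ab] by (simp add: fun_eq_iff)
  then show ?thesis using pp_cont by simp
qed

lemma bound_sum:
  assumes ab: "a < b"
  shows "(\<Sum>k<m. (-1)^k * (Df k b * pp (Suc m) a b (Suc k) b - Df k a * pp (Suc m) a b (Suc k) a))
    = (1 / fact m) * (\<Sum>k<m. quad_coeff (Suc m) a b k * (Df k a + (-1)^k * Df k b))"
  unfolding sum_distrib_left
proof (rule sum.cong)
  fix k assume k: "k \<in> {..<m}"
  have b: "bet (Suc m) a b (Suc k) = quad_coeff (Suc m) a b k / fact m" using k by (simp add: bet_def)
  have pa: "pp (Suc m) a b (Suc k) a = (-1)^(Suc k) * bet (Suc m) a b (Suc k)"
    using pp_a[OF ab, of "Suc k" m] k by simp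
  have pp1: "(-1::real)^k * (-1)^k = 1" by (simp add: power_mult_distrib[symmetric])
  have "(-1)^k * (Df k b * pp (Suc m) a b (Suc k) b - Df k a * pp (Suc m) a b (Suc k) a)
     = bet (Suc m) a b (Suc k) * (((-1)^k * (-1)^k) * Df k a + (-1)^k * Df k b)"
    unfolding pa pp_b by (simp add: algebra_simps)
  also have "\<dots> = 1 / fact m * (quad_coeff (Suc m) a b k * (Df k a + (-1)^k * Df k b))"
    unfolding pp1 b by simp
  finally show "(-1)^k * (Df k b * pp (Suc m) a b (Suc k) b - Df k a * pp (Suc m) a b (Suc k) a)
     = 1 / fact m * (quad_coeff (Suc m) a b k * (Df k a + (-1)^k * Df k b))" .
qed simp

lemma R_val:
  assumes ab: "a < b"
  shows "R_term (Suc m) a b Df = (-1)^m * (Df m a * (Kc m a b / real (Suc m) * (1 - (-1)^(Suc m))))"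
proof (cases "odd (Suc m)")
  case True
  then have ev: "even m" by simp
  have f: "fact (Suc m) = real (Suc m) * fact m" by simp
  have p: "(2::real)^(2 * Suc m - 2) = 4^m" by (simp add: power_mult)
  have r: "(-1::real)^m = 1" "(1::real) - (-1)^(Suc m) = 2" using ev by simp_all
  have gen: "\<And>H A N F Q::real. N > 0 \<Longrightarrow> F > 0 \<Longrightarrow> Q > 0 \<Longrightarrow>
      H * A / (N * F * Q) = 1 * (A * (H / (2 * Q * F) / N * 2))"
    by (simp add: field_simps)
  have Rt: "R_term (Suc m) a b Df = (b - a)^Suc m * Df m a / (real (Suc m) * fact m * 4^m)"
    using True unfolding R_term_def f p by simp
  show ?thesis unfolding Rt Kc_def r by (rule gen) auto
next
  case False
  then have "odd m" by simp
  then show ?thesis using False unfolding R_term_def by simp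
qed

lemma E_formula:
  assumes ab: "a < b" and D: "derivs_upto (Suc m) a b Df"
  shows "E_err (Suc m) a b Df = (-1)^m * integral {a..b} (\<lambda>x. (Df m x - Df m a) * Wk m a b x)"
proof -
  let ?G = "\<lambda>x. (Df m x - Df m a) * Wk m a b x"
  have cm: "continuous_on {a..b} (Df m)" using Df_cont[OF D] by simp
  have iG: "?G integrable_on {a..b}"
    by (intro integrable_continuous_real continuous_intros cm Wk_cont ab)
  have iW: "(\<lambda>x. Df m a * Wk m a b x) integrable_on {a..b}"
    by (intro integrable_continuous_real continuous_intros Wk_cont ab)
  have eqf: "(\<lambda>x. pp (Suc m) a b m x * Df m x) = (\<lambda>x. ?G x + Df m a * Wk m a b x)"
    by (rule ext) (simp add: pp_W[OF ab] algebra_simps)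
  have intW: "integral {a..b} (Wk m a b) = Kc m a b / real (Suc m) * (1 - (-1)^(Suc m))"
    using W_integral[OF ab] by (rule integral_unique)
  have I: "integral {a..b} (\<lambda>x. pp (Suc m) a b m x * Df m x)
      = integral {a..b} ?G + Df m a * (Kc m a b / real (Suc m) * (1 - (-1)^(Suc m)))"
    unfolding eqf integral_add[OF iG iW] integral_mult_right intW ..
  have pp1: "(-1::real)^m * (-1)^m = 1" by (simp add: power_mult_distrib[symmetric])
  have "E_err (Suc m) a b Df = integral {a..b} (Df 0)
     - (1 / fact m) * (\<Sum>k<m. quad_coeff (Suc m) a b k * (Df k a + (-1)^k * Df k b))
     - R_term (Suc m) a b Df"
    unfolding E_err_def by simp
  also have "\<dots> = (-1)^m * integral {a..b} (\<lambda>x. pp (Suc m) a b m x * Df m x) - R_term (Suc m) a b Df"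
    unfolding ibp[OF ab D order_refl] bound_sum[OF ab] by simp
  also have "\<dots> = (-1)^m * integral {a..b} ?G"
    unfolding I R_val[OF ab] by (simp add: algebra_simps)
  finally show ?thesis .
qed



lemma abs_int_W: "a < b \<Longrightarrow> integral {a..b} (\<lambda>x. \<bar>Wk m a b x\<bar>) = (b - a)^(Suc m) / (4^m * fact m)"
  using abs_integral by (rule integral_unique)

lemma sup_bound:
  assumes ab: "a < b" and c: "continuous_on {a..b} G" and x: "x \<in> {a..b}"
  shows "\<bar>G x\<bar> \<le> alex_norm a b G"
proof -
  have "compact ((\<lambda>x. \<bar>G x\<bar>) ` {a..b})"
    by (intro compact_continuous_image continuous_intros c) simp
  then have "bdd_above ((\<lambda>x. \<bar>G x\<bar>) ` {a..b})"
    by (intro bounded_imp_bdd_above compact_imp_bounded)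
  then show ?thesis unfolding alex_norm_def using x by (intro cSUP_upper)
qed

lemma bound_part:
  assumes ab: "a < b" and D: "derivs_upto (Suc m) a b Df"
  shows "\<bar>E_err (Suc m) a b Df\<bar> \<le> alex_norm a b (nth_deriv_primitive (Suc m) a Df) * ((b - a)^(Suc m) / (4^m * fact m))"
proof -
  let ?G = "nth_deriv_primitive (Suc m) a Df"
  let ?S = "alex_norm a b ?G"
  have G: "?G = (\<lambda>x. Df m x - Df m a)" by (simp add: nth_deriv_primitive_def)
  have cm: "continuous_on {a..b} (Df m)" using Df_cont[OF D] by simp
  have cG: "continuous_on {a..b} ?G" unfolding G by (intro continuous_intros cm)
  have i1: "(\<lambda>x. (Df m x - Df m a) * Wk m a b x) integrable_on {a..b}"
    by (intro integrable_continuous_real continuous_intros cm Wk_cont ab)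
  have i2: "(\<lambda>x. ?S * \<bar>Wk m a b x\<bar>) integrable_on {a..b}"
    by (intro integrable_continuous_real continuous_intros Wk_cont ab)
  have "\<bar>E_err (Suc m) a b Df\<bar> = norm (integral {a..b} (\<lambda>x. (Df m x - Df m a) * Wk m a b x))"
    unfolding E_formula[OF ab D] by (simp add: abs_mult)
  also have "\<dots> \<le> integral {a..b} (\<lambda>x. ?S * \<bar>Wk m a b x\<bar>)"
  proof (rule integral_norm_bound_integral[OF i1 i2])
    fix x assume x: "x \<in> {a..b}"
    have "\<bar>?G x\<bar> \<le> ?S" by (rule sup_bound[OF ab cG x])
    then show "norm ((Df m x - Df m a) * Wk m a b x) \<le> ?S * \<bar>Wk m a b x\<bar>"
      unfolding G by (simp add: abs_mult mult_right_mono)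
  qed
  also have "\<dots> = ?S * ((b - a)^(Suc m) / (4^m * fact m))"
    by (simp add: abs_int_W[OF ab])
  finally show ?thesis .
qed


definition clampf :: "real \<Rightarrow> real" where "clampf t = max (-1) (min 1 t)"

definition gk :: "nat \<Rightarrow> real \<Rightarrow> real \<Rightarrow> nat \<Rightarrow> real \<Rightarrow> real" where
  "gk m a b k x = clampf (real k * Wk m a b x) * min 1 (real k * (x - a))"

lemma clampf_abs: "\<bar>clampf t\<bar> \<le> 1" by (simp add: clampf_def)

lemma gk_cont: "a < b \<Longrightarrow> continuous_on {a..b} (gk m a b k)"
  unfolding gk_def clampf_def by (intro continuous_intros Wk_cont)

lemma gk_abs: "a \<le> x \<Longrightarrow> \<bar>gk m a b k x\<bar> \<le> 1"
proof -
  assume x: "a \<le> x"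
  have "0 \<le> min 1 (real k * (x - a))" using x by simp
  moreover have "min 1 (real k * (x - a)) \<le> 1" by simp
  ultimately have "\<bar>min 1 (real k * (x - a))\<bar> \<le> 1" by simp
  then show ?thesis unfolding gk_def abs_mult using clampf_abs
    by (intro mult_le_one) auto
qed

lemma gk_a: "gk m a b k a = 0" by (simp add: gk_def)

lemma gk_lim:
  assumes x: "a < x"
  shows "(\<lambda>k. gk m a b k x * Wk m a b x) \<longlonglongrightarrow> \<bar>Wk m a b x\<bar>"
proof (rule tendsto_eventually)
  define w where "w = Wk m a b x"
  obtain N :: nat where N: "max (1 / (x - a)) (if w = 0 then 0 else 1 / \<bar>w\<bar>) < real N"
    using reals_Archimedean2 by blast
  show "\<forall>\<^sub>F k in sequentially. gk m a b k x * Wk m a b x = \<bar>Wk m a b x\<bar>"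
    unfolding eventually_sequentially
  proof (intro exI allI impI)
    fix k assume k: "N \<le> k"
    then have Nk: "real N \<le> real k" by simp
    have "1 / (x - a) < real k" using N Nk by linarith
    then have "1 < real k * (x - a)" using x by (simp add: field_simps)
    then have m1: "min 1 (real k * (x - a)) = 1" by simp
    show "gk m a b k x * Wk m a b x = \<bar>Wk m a b x\<bar>"
    proof (cases "w = 0")
      case True then show ?thesis by (simp add: w_def[symmetric])
    next
      case False
      have "1 / \<bar>w\<bar> < real k" using N Nk False by (simp split: if_splits)
      then have kw: "1 < real k * \<bar>w\<bar>" using False by (simp add: field_simps)
      show ?thesis
      proof (cases "w > 0")
        case True
        then have "1 < real k * w" using kw by simp
        then have "clampf (real k * w) = 1" by (simp add: clampf_def)
        then show ?thesis using True unfolding gk_def m1 w_def[symmetric] by simp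
      next
        case False
        then have wn: "w < 0" using \<open>w \<noteq> 0\<close> by simp
        then have "real k * w < -1" using kw by simp
        then have "clampf (real k * w) = -1" by (simp add: clampf_def)
        then show ?thesis using wn unfolding gk_def m1 w_def[symmetric] by simp
      qed
    qed
  qed
qed

lemma gk_integral_lim:
  assumes ab: "a < b"
  shows "(\<lambda>k. integral {a..b} (\<lambda>x. gk m a b k x * Wk m a b x)) \<longlonglongrightarrow> (b - a)^(Suc m) / (4^m * fact m)"
proof -
  let ?g = "\<lambda>x. if x = a then 0 else \<bar>Wk m a b x\<bar>"
  have lim: "(\<lambda>k. integral {a..b} (\<lambda>x. gk m a b k x * Wk m a b x)) \<longlonglongrightarrow> integral {a..b} ?g"
  proof (rule dominated_convergence(2))
    show "\<And>k. (\<lambda>x. gk m a b k x * Wk m a b x) integrable_on {a..b}"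
      by (intro integrable_continuous_real continuous_intros gk_cont Wk_cont ab)
    show "(\<lambda>x. \<bar>Wk m a b x\<bar>) integrable_on {a..b}"
      by (intro integrable_continuous_real continuous_intros Wk_cont ab)
    fix k x assume x: "x \<in> {a..b}"
    show "norm (gk m a b k x * Wk m a b x) \<le> \<bar>Wk m a b x\<bar>"
      using gk_abs[of a x m b k] x by (simp add: abs_mult mult_left_le_one_le)
  next
    fix x assume x: "x \<in> {a..b}"
    show "(\<lambda>k. gk m a b k x * Wk m a b x) \<longlonglongrightarrow> ?g x"
    proof (cases "x = a")
      case True then show ?thesis by (simp add: gk_a)
    next
      case False then show ?thesis using x gk_lim[of a x m b] by simp
    qed
  qed
  have "integral {a..b} ?g = integral {a..b} (\<lambda>x. \<bar>Wk m a b x\<bar>)"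
    by (rule integral_spike[of "{a}"]) auto
  with lim show ?thesis by (simp add: abs_int_W[OF ab])
qed

fun prim :: "real \<Rightarrow> (real \<Rightarrow> real) \<Rightarrow> nat \<Rightarrow> real \<Rightarrow> real" where
  "prim a G 0 = G"
| "prim a G (Suc i) = (\<lambda>x. integral {a..x} (prim a G i))"

lemma prim_props:
  assumes c: "continuous_on {a..b} G"
  shows "continuous_on {a..b} (prim a G i) \<and>
    (\<forall>x\<in>{a..b}. (prim a G (Suc i) has_real_derivative prim a G i x) (at x within {a..b}))"
proof (induction i)
  case 0
  show ?case using c integral_has_real_derivative[OF c] by simp
next
  case (Suc i)
  then have d: "\<And>x. x \<in> {a..b} \<Longrightarrow> (prim a G (Suc i) has_real_derivative prim a G i x) (at x within {a..b})"
    by blast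
  have cs: "continuous_on {a..b} (prim a G (Suc i))" by (rule DERIV_continuous_on[OF d])
  show ?case using cs integral_has_real_derivative[OF cs] by simp
qed

lemma sharp_part:
  assumes ab: "a < b" and c: "c < (b - a)^(Suc m) / (4^m * fact m)"
  shows "\<exists>Dg. derivs_upto (Suc m) a b Dg \<and>
     \<bar>E_err (Suc m) a b Dg\<bar> > c * alex_norm a b (nth_deriv_primitive (Suc m) a Dg)"
proof -
  define c' where "c' = max c 0"
  have c': "c' < (b - a)^(Suc m) / (4^m * fact m)" using c ab by (simp add: c'_def)
  have ev: "\<forall>\<^sub>F k in sequentially. c' < integral {a..b} (\<lambda>x. gk m a b k x * Wk m a b x)"
    by (rule order_tendstoD(1)[OF gk_integral_lim[OF ab] c'])
  then obtain N where N: "\<forall>k\<ge>N. c' < integral {a..b} (\<lambda>x. gk m a b k x * Wk m a b x)"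
    unfolding eventually_sequentially by blast
  define k where "k = N"
  have k: "integral {a..b} (\<lambda>x. gk m a b k x * Wk m a b x) > c'" using N by (simp add: k_def)
  define G where "G = gk m a b k"
  have cG: "continuous_on {a..b} G" unfolding G_def by (rule gk_cont[OF ab])
  define Dg where "Dg = (\<lambda>j. prim a G (m - j))"
  have Dm: "Dg m = G" by (simp add: Dg_def)
  have der: "derivs_upto (Suc m) a b Dg"
    unfolding derivs_upto_def
  proof (intro conjI ballI allI impI)
    fix j x assume j: "j < Suc m - 1" and x: "x \<in> {a..b}"
    have e: "m - j = Suc (m - Suc j)" using j by simp
    show "(Dg j has_real_derivative Dg (Suc j) x) (at x within {a..b})"
      unfolding Dg_def e using prim_props[OF cG, of "m - Suc j"] x by blast
  next
    show "continuous_on {a..b} (Dg (Suc m - 1))" using Dm cG by simp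
  qed
  have Ga: "G a = 0" by (simp add: G_def gk_a)
  have NP: "nth_deriv_primitive (Suc m) a Dg = G" by (simp add: nth_deriv_primitive_def Dm Ga)
  have E: "\<bar>E_err (Suc m) a b Dg\<bar> = \<bar>integral {a..b} (\<lambda>x. gk m a b k x * Wk m a b x)\<bar>"
    unfolding E_formula[OF ab der] Dm Ga by (simp add: abs_mult G_def)
  have n1: "alex_norm a b G \<le> 1" unfolding alex_norm_def
    using ab by (intro cSUP_least) (auto simp: G_def gk_abs)
  have n0: "0 \<le> alex_norm a b G" using sup_bound[OF ab cG, of a] ab by simp
  have "c * alex_norm a b G \<le> c' * alex_norm a b G" using n0 by (intro mult_right_mono) (auto simp: c'_def)
  also have "\<dots> \<le> c'" using n1 by (intro mult_left_le) (auto simp: c'_def)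
  also have "\<dots> < \<bar>E_err (Suc m) a b Dg\<bar>" unfolding E using k by simp
  finally show ?thesis using der NP by auto
qed


theorem theorem4p1:
  fixes n :: nat and a b :: real and Df :: "nat \<Rightarrow> real \<Rightarrow> real"
  assumes "n \<ge> 1" and "a < b" and "derivs_upto n a b Df"
  shows "Ac_primitive a b (nth_deriv_primitive n a Df)
    \<and> \<bar>E_err n a b Df\<bar>
        \<le> alex_norm a b (nth_deriv_primitive n a Df) * (b - a) ^ n / (fact (n - 1) * 2 ^ (2 * n - 2))
    \<and> (\<forall>c < (b - a) ^ n / (fact (n - 1) * 2 ^ (2 * n - 2)).
         \<exists>Dg. derivs_upto n a b Dg \<and>
              \<bar>E_err n a b Dg\<bar> > c * alex_norm a b (nth_deriv_primitive n a Dg))"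
proof -
  obtain m where n: "n = Suc m" using assms(1) by (cases n) auto
  have ab: "a < b" by (rule assms(2))
  have D: "derivs_upto (Suc m) a b Df" using assms(3) n by simp
  have C: "(b - a) ^ n / (fact (n - 1) * 2 ^ (2 * n - 2)) = (b - a)^(Suc m) / (4^m * fact m)"
  proof -
    have e: "2 * n - 2 = 2 * m" "n - 1 = m" by (simp_all add: n)
    have p: "(2::real)^(2*m) = 4^m" by (simp add: power_mult)
    show ?thesis unfolding e p unfolding n by (simp add: mult.commute)
  qed
  have P1: "Ac_primitive a b (nth_deriv_primitive n a Df)"
    unfolding Ac_primitive_def nth_deriv_primitive_def n
    using Df_cont[OF D order_refl] by (auto intro!: continuous_intros)
  have P2: "\<bar>E_err n a b Df\<bar> \<le> alex_norm a b (nth_deriv_primitive n a Df) * (b - a) ^ n / (fact (n - 1) * 2 ^ (2 * n - 2))"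
    using bound_part[OF ab D] unfolding times_divide_eq_right[symmetric] C by (simp add: n)
  have P3: "\<forall>c < (b - a) ^ n / (fact (n - 1) * 2 ^ (2 * n - 2)).
         \<exists>Dg. derivs_upto n a b Dg \<and>
              \<bar>E_err n a b Dg\<bar> > c * alex_norm a b (nth_deriv_primitive n a Dg)"
    unfolding C unfolding n using sharp_part[OF ab] by blast
  show ?thesis using P1 P2 P3 by blast
qed


end
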